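(* Let $\kappa\ge3$, $h>0$, $f_{\mathrm{hard}}$ and $S_i^x$ be as defined below. There is $d_0$ (absolute) such that for all $d\ge d_0$ and every fixed $x\in\mathbb{R}^d$, with probability at least $1-d^{-5}$ over $g\sim\mathcal N(0,I_d)$, $$\sum_{i=1}^dS_i^x-\mathbb{E}_g\Big[\sum_{i=1}^dS_i^x\Big]\le 10\,h\kappa\sqrt{d\log d}.$$
   Context: $f_{\mathrm{hard}}(x)=\sum_{i=1}^d f_i(x_i)$ with $f_1(c)=\frac12c^2$ and $f_i(c)=\frac\kappa3c^2-\frac{\kappa h}3\cos\frac c{\sqrt h}$ for $2\le i\le d$. For $g\in\mathbb{R}^d$, $x_g=x+\sqrt{2h}\,g$ and $S_i^x=-f_i([x_g]_i)+f_i(x_i)-\frac12(x_i-[x_g]_i)(f_i'(x_i)+f_i'([x_g]_i))$. *)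

theory Defs
  imports "HOL-Probability.Probability"
begin

definition f_coord :: "real \<Rightarrow> real \<Rightarrow> nat \<Rightarrow> real \<Rightarrow> real" where
  "f_coord \<kappa> h i c =
     (if i = 1 then c\<^sup>2 / 2
      else \<kappa> / 3 * c\<^sup>2 - \<kappa> * h / 3 * cos (c / sqrt h))"

definition f_hard :: "real \<Rightarrow> real \<Rightarrow> nat \<Rightarrow> (nat \<Rightarrow> real) \<Rightarrow> real" where
  "f_hard \<kappa> h d x = (\<Sum>i=1..d. f_coord \<kappa> h i (x i))"

definition x_g :: "real \<Rightarrow> (nat \<Rightarrow> real) \<Rightarrow> (nat \<Rightarrow> real) \<Rightarrow> (nat \<Rightarrow> real)" where
  "x_g h x g = (\<lambda>i. x i + sqrt (2 * h) * g i)"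

definition S_coord :: "real \<Rightarrow> real \<Rightarrow> nat \<Rightarrow> (nat \<Rightarrow> real) \<Rightarrow> (nat \<Rightarrow> real) \<Rightarrow> real" where
  "S_coord \<kappa> h i x g =
     (let y = x_g h x g i; f = f_coord \<kappa> h i in
      - f y + f (x i) - 1/2 * (x i - y) * (deriv f (x i) + deriv f y))"

definition gauss :: "nat \<Rightarrow> (nat \<Rightarrow> real) measure" where
  "gauss d = PiM {1..d} (\<lambda>_. density lborel std_normal_density)"

end

theory Submission
  imports Defs
begin

lemma exp_quad_bound: "exp (z::real) \<le> 1 + z + z\<^sup>2 / 2 * exp \<bar>z\<bar>"
proof -
  obtain t where t: "\<bar>t\<bar> \<le> \<bar>z\<bar>" "exp z = (\<Sum>m<2. (z ^ m) / fact m) + (exp t / fact 2) * z ^ 2"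
    using Maclaurin_exp_le[of z 2] by blast
  have "exp t \<le> exp \<bar>z\<bar>" using t(1) by simp
  hence "exp t / 2 * z^2 \<le> exp \<bar>z\<bar> / 2 * z^2" by (intro mult_right_mono) auto
  thus ?thesis using t(2) by (simp add: numeral_2_eq_2 mult_ac)
qed

lemma sq_le_exp: "(y::real)\<^sup>2 \<le> 8 * exp (\<bar>y\<bar> / 2)"
proof -
  have "1 + \<bar>y\<bar>/2 + (\<bar>y\<bar>/2)\<^sup>2 / 2 \<le> exp (\<bar>y\<bar>/2)"
    by (rule exp_lower_Taylor_quadratic) simp
  moreover have "(\<bar>y\<bar>/2)\<^sup>2 = y\<^sup>2/4" by (simp add: power_divide)
  ultimately show ?thesis by simp
qed

lemma exp_num: "exp (1.4403125::real) \<le> 5.625"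
proof -
  have "exp (1.4403125::real) \<le> exp (3/2)" by simp
  moreover have "(exp (3/2::real))^2 = exp 3"
    by (simp flip: exp_of_nat_mult exp_add add: power2_eq_square)
  moreover have "exp (3::real) = (exp 1)^3"
    by (simp flip: exp_of_nat_mult)
  moreover have "(exp 1::real)^3 \<le> 3^3"
    using exp_le by (intro power_mono) auto
  ultimately have "(exp (3/2::real))^2 \<le> 27" by simp
  also have "(27::real) \<le> 5.625^2" by (simp add: power2_eq_square)
  finally have "(exp (3/2::real))^2 \<le> 5.625^2" .
  hence "exp (3/2::real) \<le> 5.625" by (rule power2_le_imp_le) simp
  with \<open>exp (1.4403125::real) \<le> exp (3/2)\<close> show ?thesis by linarith
qed

lemma std_exp_shift: "std_normal_density x * exp (c * x) = exp (c\<^sup>2/2) * normal_density c 1 x"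
proof -
  have "- x\<^sup>2 / 2 + c * x = c\<^sup>2/2 + (-(x - c)\<^sup>2 / 2)" by (simp add: power2_eq_square field_simps)
  hence "exp (- x\<^sup>2 / 2) * exp (c * x) = exp (c\<^sup>2/2) * exp (-(x - c)\<^sup>2 / 2)"
    by (metis exp_add)
  thus ?thesis by (simp add: normal_density_def std_normal_density_def)
qed

lemma integrable_std_exp: "integrable lborel (\<lambda>x. std_normal_density x * exp (c * x))"
  unfolding std_exp_shift using integrable_normal_density[where \<sigma>=1 and \<mu>=c] by simp

lemma integrable_std_exp': "integrable lborel (\<lambda>x. std_normal_density x * exp (- (c * x)))"
  using integrable_std_exp[of "-c"] by simp

lemma integral_std_exp: "(\<integral>x. std_normal_density x * exp (c * x) \<partial>lborel) = exp (c\<^sup>2/2)"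
  unfolding std_exp_shift using integral_normal_density[where \<sigma>=1 and \<mu>=c] by simp

lemma integral_std_exp': "(\<integral>x. std_normal_density x * exp (- (c * x)) \<partial>lborel) = exp (c\<^sup>2/2)"
  using integral_std_exp[of "-c"] by simp

abbreviation "NN \<equiv> density lborel std_normal_density"

lemma prob_NN: "prob_space NN"
  by (rule prob_space_normal_density) simp

lemma integrable_NN_iff: "f \<in> borel_measurable borel \<Longrightarrow> integrable NN f \<longleftrightarrow> integrable lborel (\<lambda>x. std_normal_density x * f x)"
  by (subst integrable_density) auto

lemma integral_NN: "f \<in> borel_measurable borel \<Longrightarrow> integral\<^sup>L NN f = (\<integral>x. std_normal_density x * f x \<partial>lborel)"
  by (subst integral_density) auto

lemma integrable_exp_abs: "integrable NN (\<lambda>x. exp (c * \<bar>x\<bar>))"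
proof -
  have h1: "integrable NN (\<lambda>x. exp (c * x) + exp ((-c) * x))"
    by (subst integrable_NN_iff) (auto simp: distrib_left intro!: integrable_std_exp integrable_std_exp' Bochner_Integration.integrable_add)
  have h2: "\<And>x. exp (c * \<bar>x\<bar>) \<le> exp (c * x) + exp ((-c) * x)"
    by (auto simp: abs_real_def add_increasing add_increasing2)
  have h3: "\<And>x. norm (exp (c * \<bar>x\<bar>)) \<le> norm (exp (c * x) + exp ((-c) * x))"
    using h2 by (smt (verit) exp_gt_zero real_norm_def)
  show ?thesis
    apply (rule Bochner_Integration.integrable_bound[OF h1])
     apply measurable
    by (rule AE_I2, rule h3)
qed

lemma integral_exp_abs: "(\<integral>x. exp (c * \<bar>x\<bar>) \<partial>NN) \<le> 2 * exp (c\<^sup>2/2)"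
proof -
  have i1: "integrable NN (\<lambda>x. exp (c * x))" "integrable NN (\<lambda>x. exp ((-c) * x))"
    by (subst integrable_NN_iff; auto intro!: integrable_std_exp integrable_std_exp')+
  have "(\<integral>x. exp (c * \<bar>x\<bar>) \<partial>NN) \<le> (\<integral>x. exp (c * x) + exp ((-c) * x) \<partial>NN)"
    apply (rule integral_mono[OF integrable_exp_abs Bochner_Integration.integrable_add[OF i1]])
    by (auto simp: abs_real_def add_increasing add_increasing2)
  also have "\<dots> = (\<integral>x. exp (c * x) \<partial>NN) + (\<integral>x. exp ((-c) * x) \<partial>NN)"
    by (rule Bochner_Integration.integral_add[OF i1])
  also have "\<dots> = 2 * exp (c\<^sup>2/2)"
    by (simp add: integral_NN integral_std_exp integral_std_exp')
  finally show ?thesis .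
qed


lemma NN_const: "(\<integral>x. (a::real) \<partial>NN) = a"
  using prob_space.prob_space[OF prob_NN] by (simp add: lebesgue_integral_const)

lemma NN_UNIV: "measure NN UNIV = 1"
  using prob_space.prob_space[OF prob_NN] by simp

lemma NN_int_const: "integrable NN (\<lambda>x. a::real)"
proof -
  interpret prob_space NN by (rule prob_NN)
  show ?thesis by simp
qed

lemma mgf_1d:
  fixes F :: "real \<Rightarrow> real" and l :: real
  assumes Fm[measurable]: "F \<in> borel_measurable borel"
    and Fb: "\<And>u. \<bar>F u\<bar> \<le> 2 + 3/2 * \<bar>u\<bar>" and l: "0 \<le> l" "l \<le> 1/20"
  shows "integrable NN F" "integrable NN (\<lambda>u. exp (l * F u))"
    "(\<integral>u. exp (l * F u) \<partial>NN) \<le> 1 + l * (\<integral>u. F u \<partial>NN) + 45 * l\<^sup>2"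
proof -
  have e1: "1 + \<bar>u\<bar> \<le> exp (1 * \<bar>u\<bar>)" for u :: real using exp_ge_add_one_self[of "\<bar>u\<bar>"] by (simp only: mult_1)
  have iF: "integrable NN F"
  proof (rule Bochner_Integration.integrable_bound[OF integrable_mult_right[OF integrable_exp_abs, of 2 1]])
    show "F \<in> borel_measurable NN" by measurable
    show "AE x in NN. norm (F x) \<le> norm (2 * exp (1 * \<bar>x\<bar>))"
    proof (rule AE_I2)
      fix x show "norm (F x) \<le> norm (2 * exp (1 * \<bar>x\<bar>))"
      proof -
        have "\<bar>F x\<bar> \<le> 2 * exp (1 * \<bar>x\<bar>)" using Fb[of x] e1[of x] abs_ge_zero[of x] by linarith
        thus ?thesis by simp
      qed
    qed
  qed
  have iE: "integrable NN (\<lambda>u. exp (l * F u))"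
  proof (rule Bochner_Integration.integrable_bound[OF integrable_mult_right[OF integrable_exp_abs, of "exp 1" 1]])
    show "(\<lambda>u. exp (l * F u)) \<in> borel_measurable NN" by measurable
    show "AE x in NN. norm (exp (l * F x)) \<le> norm (exp 1 * exp (1 * \<bar>x\<bar>))"
    proof (rule AE_I2)
      fix x
      have "l * F x \<le> l * \<bar>F x\<bar>" using l by (simp add: mult_left_mono)
      also have "\<dots> \<le> 1/20 * (2 + 3/2 * \<bar>x\<bar>)"
        using l Fb[of x] by (intro mult_mono) auto
      also have "\<dots> \<le> 1 + 1 * \<bar>x\<bar>" by simp
      finally have "exp (l * F x) \<le> exp (1 + 1 * \<bar>x\<bar>)" by simp
      thus "norm (exp (l * F x)) \<le> norm (exp 1 * exp (1 * \<bar>x\<bar>))"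
        by (simp add: exp_add)
    qed
  qed
  define K where "K = 4 * l\<^sup>2 * exp 1.1"
  have K0: "K \<ge> 0" by (simp add: K_def)
  have pw: "exp (l * F u) \<le> 1 + l * F u + K * exp (0.825 * \<bar>u\<bar>)" for u
  proof -
    have "exp (l * F u) \<le> 1 + l * F u + (l * F u)\<^sup>2 / 2 * exp \<bar>l * F u\<bar>"
      by (rule exp_quad_bound)
    also have "(l * F u)\<^sup>2 / 2 * exp \<bar>l * F u\<bar> \<le> l\<^sup>2 * (8 * exp (\<bar>F u\<bar> / 2)) / 2 * exp (l * \<bar>F u\<bar>)"
    proof -
      have a: "(l * F u)\<^sup>2 \<le> l\<^sup>2 * (8 * exp (\<bar>F u\<bar> / 2))"
        using sq_le_exp[of "F u"] by (simp add: power_mult_distrib mult_left_mono)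
      have b: "exp \<bar>l * F u\<bar> = exp (l * \<bar>F u\<bar>)" using l by (simp add: abs_mult)
      show ?thesis unfolding b
        by (rule mult_right_mono[OF divide_right_mono[OF a]]) auto
    qed
    also have "\<dots> = 4 * l\<^sup>2 * exp (\<bar>F u\<bar> / 2 + l * \<bar>F u\<bar>)"
      by (simp add: exp_add)
    also have "\<dots> \<le> 4 * l\<^sup>2 * exp (1.1 + 0.825 * \<bar>u\<bar>)"
    proof -
      have "\<bar>F u\<bar> / 2 + l * \<bar>F u\<bar> \<le> \<bar>F u\<bar> / 2 + 1/20 * \<bar>F u\<bar>"
        using l by (intro add_left_mono mult_right_mono) auto
      also have "\<dots> \<le> 1.1 + 0.825 * \<bar>u\<bar>" using Fb[of u] by simp
      finally show ?thesis by (intro mult_left_mono) auto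
    qed
    also have "\<dots> = K * exp (0.825 * \<bar>u\<bar>)" by (simp add: K_def exp_add)
    finally show ?thesis by simp
  qed
  have i3: "integrable NN (\<lambda>u. K * exp (0.825 * \<bar>u\<bar>))"
    by (intro integrable_mult_right integrable_exp_abs)
  have i12: "integrable NN (\<lambda>u. 1 + l * F u)"
    using iF NN_int_const by (intro Bochner_Integration.integrable_add integrable_mult_right) auto
  have "(\<integral>u. exp (l * F u) \<partial>NN) \<le> (\<integral>u. 1 + l * F u + K * exp (0.825 * \<bar>u\<bar>) \<partial>NN)"
    by (intro integral_mono iE Bochner_Integration.integrable_add i12 i3 pw)
  also have "\<dots> = (\<integral>u. 1 + l * F u \<partial>NN) + (\<integral>u. K * exp (0.825 * \<bar>u\<bar>) \<partial>NN)"
    by (rule Bochner_Integration.integral_add[OF i12 i3])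
  also have "(\<integral>u. 1 + l * F u \<partial>NN) = 1 + l * (\<integral>u. F u \<partial>NN)"
    using iF NN_int_const
    by (subst Bochner_Integration.integral_add) (auto simp: NN_const NN_UNIV)
  also have "(\<integral>u. K * exp (0.825 * \<bar>u\<bar>) \<partial>NN) \<le> K * (2 * exp (0.825\<^sup>2/2))"
    using integral_exp_abs[of "0.825"] K0 by (simp add: mult_left_mono)
  also have "K * (2 * exp (0.825\<^sup>2/2)) = 8 * l\<^sup>2 * exp 1.4403125"
    by (simp add: K_def mult_exp_exp power2_eq_square)
  also have "\<dots> \<le> 8 * l\<^sup>2 * 5.625"
    using exp_num by (intro mult_left_mono) auto
  finally show "(\<integral>u. exp (l * F u) \<partial>NN) \<le> 1 + l * (\<integral>u. F u \<partial>NN) + 45 * l\<^sup>2" by simp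
  show "integrable NN F" by (rule iF)
  show "integrable NN (\<lambda>u. exp (l * F u))" by (rule iE)
qed


lemma factor_bound:
  fixes F :: "real \<Rightarrow> real" and l :: real
  assumes Fm[measurable]: "F \<in> borel_measurable borel"
    and Fb: "\<And>u. \<bar>F u\<bar> \<le> 2 + 3/2 * \<bar>u\<bar>" and l: "0 \<le> l" "l \<le> 1/20"
  shows "(\<integral>\<^sup>+u. ennreal (exp (l * (F u - (\<integral>v. F v \<partial>NN)))) \<partial>NN) \<le> ennreal (exp (45 * l\<^sup>2))"
proof -
  define m where "m = (\<integral>v. F v \<partial>NN)"
  note mg = mgf_1d[OF Fm Fb l]
  have eq: "(\<lambda>u. exp (l * (F u - m))) = (\<lambda>u. exp (- (l * m)) * exp (l * F u))"
    by (rule ext) (simp add: right_diff_distrib flip: exp_add)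
  have int: "integrable NN (\<lambda>u. exp (l * (F u - m)))"
    unfolding eq by (intro integrable_mult_right mg(2))
  have "(\<integral>\<^sup>+u. ennreal (exp (l * (F u - m))) \<partial>NN) = ennreal (\<integral>u. exp (l * (F u - m)) \<partial>NN)"
    by (rule nn_integral_eq_integral[OF int]) auto
  also have "(\<integral>u. exp (l * (F u - m)) \<partial>NN) = exp (- (l * m)) * (\<integral>u. exp (l * F u) \<partial>NN)"
    unfolding eq by simp
  also have "\<dots> \<le> exp (- (l * m)) * (1 + l * m + 45 * l\<^sup>2)"
    using mg(3) unfolding m_def by (intro mult_left_mono) auto
  also have "\<dots> \<le> exp (- (l * m)) * exp (l * m + 45 * l\<^sup>2)"
    by (intro mult_left_mono) (auto simp: add.assoc exp_ge_add_one_self)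
  also have "\<dots> = exp (45 * l\<^sup>2)" by (simp flip: exp_add)
  finally show ?thesis unfolding m_def by (simp add: ennreal_leI)
qed


lemma sf_NN: "sigma_finite_measure NN"
  using prob_NN by (simp add: prob_space_imp_sigma_finite)

lemma chernoff_prod:
  fixes F :: "nat \<Rightarrow> real \<Rightarrow> real" and d :: nat and l t :: real
  assumes Fm[measurable]: "\<And>i. F i \<in> borel_measurable borel"
    and Fb: "\<And>i u. \<bar>F i u\<bar> \<le> 2 + 3/2 * \<bar>u\<bar>" and l: "0 < l" "l \<le> 1/20"
  shows "measure (gauss d) {g \<in> space (gauss d). (\<Sum>i=1..d. F i (g i)) - (\<integral>g. (\<Sum>i=1..d. F i (g i)) \<partial>gauss d) \<le> t}
          \<ge> 1 - exp (- l * t + 45 * l\<^sup>2 * real d)"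
proof -
  define I where "I = {1..d}"
  interpret P: product_prob_space "\<lambda>_. NN" I
    by (intro product_prob_space.intro product_sigma_finite.intro product_prob_space_axioms.intro sf_NN prob_NN)
  define M where "M = gauss d"
  have M: "M = PiM I (\<lambda>_. NN)" unfolding M_def gauss_def I_def by simp
  interpret prob_space M unfolding M by (rule P.P.prob_space_axioms)
  define m where "m i = (\<integral>v. F i v \<partial>NN)" for i
  have marg: "integrable M (\<lambda>g. F i (g i)) \<and> (\<integral>g. F i (g i) \<partial>M) = m i" if i: "i \<in> I" for i
  proof -
    have meas: "(\<lambda>\<omega>. \<omega> i) \<in> measurable M NN" unfolding M using i by (rule measurable_component_singleton)
    have dst: "distr M NN (\<lambda>\<omega>. \<omega> i) = NN" unfolding M
      by (rule distr_PiM_component[OF prob_NN i])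
    have "integrable NN (F i)" using mgf_1d(1)[OF Fm Fb, of 0] by simp
    hence "integrable (distr M NN (\<lambda>\<omega>. \<omega> i)) (F i)" unfolding dst .
    hence 1: "integrable M (\<lambda>g. F i (g i))" by (subst (asm) integrable_distr_eq[OF meas]) auto
    have "(\<integral>g. F i (g i) \<partial>M) = integral\<^sup>L (distr M NN (\<lambda>\<omega>. \<omega> i)) (F i)"
      by (rule integral_distr[OF meas, symmetric]) simp
    also have "\<dots> = m i" unfolding dst m_def ..
    finally show ?thesis using 1 by simp
  qed
  have E: "(\<integral>g. (\<Sum>i\<in>I. F i (g i)) \<partial>M) = (\<Sum>i\<in>I. m i)"
    by (subst Bochner_Integration.integral_sum) (use marg in auto)
  define Z where "Z g = (\<Sum>i\<in>I. F i (g i) - m i)" for g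
  have Zm[measurable]: "Z \<in> borel_measurable M" unfolding Z_def M by measurable
  have set_eq: "{g \<in> space M. (\<Sum>i\<in>I. F i (g i)) - (\<integral>g. (\<Sum>i\<in>I. F i (g i)) \<partial>M) \<le> t} = {g \<in> space M. Z g \<le> t}"
    unfolding E Z_def by (simp add: sum_subtractf)
  have "emeasure M {g \<in> space M. Z g \<ge> t} \<le>
        ennreal (exp (-l * t)) * (\<integral>\<^sup>+g. ennreal (exp (l * Z g)) * indicator (space M) g \<partial>M)"
    by (intro Chernoff_ineq_nn_integral_ge l) auto
  also have "(\<integral>\<^sup>+g. ennreal (exp (l * Z g)) * indicator (space M) g \<partial>M) =
             (\<integral>\<^sup>+g. (\<Prod>i\<in>I. ennreal (exp (l * (F i (g i) - m i)))) \<partial>M)"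
    by (intro nn_integral_cong)
       (simp add: Z_def sum_distrib_left exp_sum I_def prod_ennreal)
  also have "\<dots> = (\<Prod>i\<in>I. \<integral>\<^sup>+u. ennreal (exp (l * (F i u - m i))) \<partial>NN)"
    unfolding M by (rule P.product_nn_integral_prod) (auto simp: I_def)
  also have "ennreal (exp (-l * t)) * \<dots> \<le> ennreal (exp (-l * t)) * (\<Prod>i\<in>I. ennreal (exp (45 * l\<^sup>2)))"
    using factor_bound[OF Fm Fb] l unfolding m_def by (intro mult_left_mono prod_mono_ennreal) auto
  also have "\<dots> = ennreal (exp (-l * t) * exp (45 * l\<^sup>2) ^ d)"
    by (simp add: I_def ennreal_mult ennreal_power)
  also have "exp (-l * t) * exp (45 * l\<^sup>2) ^ d = exp (- l * t + 45 * l\<^sup>2 * real d)"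
  proof -
    have "exp (45 * l\<^sup>2) ^ d = exp (real d * (45 * l\<^sup>2))" by (rule exp_of_nat_mult[symmetric])
    moreover have "exp (-l * t) * exp (real d * (45 * l\<^sup>2)) = exp (-l * t + real d * (45 * l\<^sup>2))"
      by (rule exp_add[symmetric])
    ultimately show ?thesis by (simp add: mult_ac)
  qed
  finally have ch: "measure M {g \<in> space M. Z g \<ge> t} \<le> exp (- l * t + 45 * l\<^sup>2 * real d)"
    by (simp add: emeasure_eq_measure)
  have "1 = measure M ({g \<in> space M. Z g \<le> t} \<union> {g \<in> space M. Z g \<ge> t})"
  proof -
    have "{g \<in> space M. Z g \<le> t} \<union> {g \<in> space M. Z g \<ge> t} = space M" by auto
    thus ?thesis by (simp add: prob_space)
  qed
  also have "\<dots> \<le> measure M {g \<in> space M. Z g \<le> t} + measure M {g \<in> space M. Z g \<ge> t}"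
    by (intro measure_Un_le) auto
  finally have "measure M {g \<in> space M. Z g \<le> t} \<ge> 1 - exp (- l * t + 45 * l\<^sup>2 * real d)"
    using ch by linarith
  thus ?thesis using set_eq unfolding M_def I_def by simp
qed


lemma numeric:
  fixes d :: real
  assumes d: "d \<ge> 8000"
  defines "s \<equiv> sqrt (d * ln d)"
  shows "0 < s / (3 * d)" "s / (3 * d) \<le> 1/20"
    "exp (- (s / (3 * d)) * (30 * s) + 45 * (s / (3 * d))\<^sup>2 * d) = d powr (-5)"
proof -
  have d0: "d > 1" using d by simp
  have lnpos: "ln d > 0" using d0 by simp
  have ss: "s\<^sup>2 = d * ln d" unfolding s_def using d0 lnpos by simp
  show "0 < s / (3 * d)" unfolding s_def using d0 lnpos by simp
  have "ln d = 2 * ln (sqrt d)" using d0 by (simp add: ln_sqrt)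
  also have "\<dots> \<le> 2 * sqrt d"
  proof -
    have "ln (sqrt d) < sqrt d" by (rule ln_less_self) (use d0 in simp)
    thus ?thesis by simp
  qed
  finally have l1: "ln d \<le> 2 * sqrt d" .
  have "sqrt 8000 \<ge> (89::real)" by (rule real_le_rsqrt) simp
  hence sq: "sqrt d \<ge> 89" using d by (meson order.trans real_sqrt_le_iff)
  have "400 * ln d \<le> 800 * sqrt d" using l1 by simp
  also have "\<dots> \<le> 9 * (sqrt d * sqrt d)" using sq d0 by (intro mult_right_mono[of 800 "9 * sqrt d" "sqrt d", simplified mult.assoc]) auto
  also have "\<dots> = 9 * d" using d0 by simp
  finally have key: "400 * ln d \<le> 9 * d" .
  have k2: "d * ln d \<le> d * (9 * d / 400)" using key d0 by (intro mult_left_mono) auto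
  have k3: "(3 * d / 20)\<^sup>2 = d * (9 * d / 400)" by (simp add: power2_eq_square)
  have "s\<^sup>2 \<le> (3 * d / 20)\<^sup>2" unfolding ss k3 by (rule k2)
  hence "s \<le> 3 * d / 20" by (rule power2_le_imp_le) (use d0 in simp)
  hence "s / (3 * d) \<le> (3 * d / 20) / (3 * d)" by (rule divide_right_mono) (use d0 in simp)
  also have "(3 * d / 20) / (3 * d) = 1/20" using d0 by simp
  finally show "s / (3 * d) \<le> 1/20" .
  have "- (s / (3 * d)) * (30 * s) + 45 * (s / (3 * d))\<^sup>2 * d = - 5 * (s\<^sup>2 / d)"
  proof -
    have dn: "d \<noteq> 0" using d0 by simp
    have e1: "- (s / (3 * d)) * (30 * s) = - 10 * (s * s / d)" using dn by (simp add: field_simps)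
    have e2: "45 * (s / (3 * d))\<^sup>2 * d = 5 * (s * s / d)" using dn by (simp add: field_simps power2_eq_square)
    have "- (s / (3 * d)) * (30 * s) + 45 * (s / (3 * d))\<^sup>2 * d = - 5 * (s * s / d)" using e1 e2 by linarith
    thus ?thesis by (simp add: power2_eq_square)
  qed
  also have "\<dots> = -5 * ln d" unfolding ss using d0 by simp
  finally show "exp (- (s / (3 * d)) * (30 * s) + 45 * (s / (3 * d))\<^sup>2 * d) = d powr (-5)"
    using d0 by (simp add: powr_def)
qed

definition TT :: "real \<Rightarrow> real \<Rightarrow> real" where
  "TT a u = cos (a + sqrt 2 * u) - cos a + sqrt 2 / 2 * u * (sin a + sin (a + sqrt 2 * u))"

lemma TT_bound: "\<bar>TT a u\<bar> \<le> 2 + 3/2 * \<bar>u\<bar>"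
proof -
  have "sqrt 2 \<le> sqrt ((3/2::real)\<^sup>2)" by (subst real_sqrt_le_iff) (simp add: power2_eq_square)
  hence s2: "sqrt 2 \<le> (3/2::real)" by simp
  have "\<bar>sqrt 2 / 2 * u * (sin a + sin (a + sqrt 2 * u))\<bar> = sqrt 2 / 2 * \<bar>u\<bar> * \<bar>sin a + sin (a + sqrt 2 * u)\<bar>"
    by (simp add: abs_mult)
  also have "\<dots> \<le> sqrt 2 / 2 * \<bar>u\<bar> * 2"
  proof -
    have "\<bar>sin a + sin (a + sqrt 2 * u)\<bar> \<le> 2"
      using abs_sin_le_one[of a] abs_sin_le_one[of "a + sqrt 2 * u"] abs_triangle_ineq[of "sin a" "sin (a + sqrt 2 * u)"] by linarith
    thus ?thesis by (intro mult_left_mono) auto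
  qed
  also have "\<dots> = sqrt 2 * \<bar>u\<bar>" by simp
  also have "\<dots> \<le> 3/2 * \<bar>u\<bar>" using s2 by (intro mult_right_mono) auto
  finally have "\<bar>sqrt 2 / 2 * u * (sin a + sin (a + sqrt 2 * u))\<bar> \<le> 3/2 * \<bar>u\<bar>" .
  moreover have "\<bar>cos (a + sqrt 2 * u)\<bar> \<le> 1" "\<bar>cos a\<bar> \<le> 1" by (rule abs_cos_le_one)+
  ultimately show ?thesis unfolding TT_def by linarith
qed

lemma TT_meas: "TT a \<in> borel_measurable borel"
  unfolding TT_def by (intro borel_measurable_continuous_onI continuous_intros)

lemma deriv_f1: "deriv (f_coord \<kappa> h 1) c = c"
proof -
  have "f_coord \<kappa> h 1 = (\<lambda>c. c\<^sup>2 / 2)" by (rule ext) (simp add: f_coord_def)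
  moreover have "((\<lambda>c. c\<^sup>2 / 2) has_real_derivative c) (at c)"
    by (auto intro!: derivative_eq_intros)
  ultimately show ?thesis by (simp add: DERIV_imp_deriv)
qed

lemma deriv_fi: "i \<noteq> 1 \<Longrightarrow> h > 0 \<Longrightarrow> deriv (f_coord \<kappa> h i) c = 2 * \<kappa> / 3 * c + \<kappa> * h / 3 * sin (c / sqrt h) / sqrt h"
proof -
  assume i: "i \<noteq> 1" and h: "h > 0"
  have "f_coord \<kappa> h i = (\<lambda>c. \<kappa> / 3 * c\<^sup>2 - \<kappa> * h / 3 * cos (c / sqrt h))" using i by (intro ext) (simp add: f_coord_def)
  moreover have "((\<lambda>c. \<kappa> / 3 * c\<^sup>2 - \<kappa> * h / 3 * cos (c / sqrt h)) has_real_derivative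
      (2 * \<kappa> / 3 * c + \<kappa> * h / 3 * sin (c / sqrt h) / sqrt h)) (at c)"
    using h by (auto intro!: derivative_eq_intros simp: field_simps)
  ultimately show ?thesis by (simp add: DERIV_imp_deriv)
qed


lemma ring_id:
  fixes k r a u q C0 C1 S0 S1 y :: real
  assumes y: "y = a * r + q * r * u"
  shows "- (k / 3 * y\<^sup>2 - k * (r*r) / 3 * C1) + (k / 3 * (a*r)\<^sup>2 - k * (r*r) / 3 * C0)
      - 1/2 * (a * r - y) * ((2 * k / 3 * (a * r) + k * r / 3 * S0)
                            + (2 * k / 3 * y + k * r / 3 * S1))
      = k * (r*r) / 3 * (C1 - C0 + q / 2 * u * (S0 + S1))"
  unfolding y by (simp add: field_simps power2_eq_square)

lemma S_eq:
  assumes h: "h > 0"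
  shows "S_coord \<kappa> h i x g = \<kappa> * h / 3 * (if i = 1 then 0 else TT (x i / sqrt h) (g i))"
proof (cases "i = 1")
  case True
  have "S_coord \<kappa> h 1 x g = 0"
    unfolding S_coord_def Let_def deriv_f1 by (simp add: f_coord_def power2_eq_square algebra_simps)
  thus ?thesis using True by simp
next
  case False
  define r where "r = sqrt h"
  define a where "a = x i / r"
  define u where "u = g i"
  have r: "r > 0" using h by (simp add: r_def)
  have hr: "h = r * r" using h by (simp add: r_def)
  have xi: "x i = a * r" using r by (simp add: a_def)
  have s2h: "sqrt (2 * h) = sqrt 2 * r" by (simp add: r_def real_sqrt_mult)
  define y where "y = a * r + sqrt 2 * r * u"
  have y: "x_g h x g i = y" unfolding x_g_def y_def xi s2h u_def by (simp add: algebra_simps)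
  have yr: "y / r = a + sqrt 2 * u" using r by (simp add: y_def field_simps)
  have ar: "a * r / r = a" using r by simp
  have s22: "sqrt 2 * sqrt 2 = (2::real)" by simp
  have "S_coord \<kappa> h i x g =
      - (\<kappa> / 3 * y\<^sup>2 - \<kappa> * h / 3 * cos (y / r)) + (\<kappa> / 3 * (a*r)\<^sup>2 - \<kappa> * h / 3 * cos (a * r / r))
      - 1/2 * (a * r - y) * ((2 * \<kappa> / 3 * (a * r) + \<kappa> * h / 3 * sin (a * r / r) / r)
                            + (2 * \<kappa> / 3 * y + \<kappa> * h / 3 * sin (y / r) / r))"
    unfolding S_coord_def Let_def y deriv_fi[OF False h] using False by (simp add: f_coord_def xi r_def)
  also have "\<dots> = - (\<kappa> / 3 * y\<^sup>2 - \<kappa> * (r*r) / 3 * cos (a + sqrt 2 * u)) + (\<kappa> / 3 * (a*r)\<^sup>2 - \<kappa> * (r*r) / 3 * cos a)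
      - 1/2 * (a * r - y) * ((2 * \<kappa> / 3 * (a * r) + \<kappa> * r / 3 * sin a)
                            + (2 * \<kappa> / 3 * y + \<kappa> * r / 3 * sin (a + sqrt 2 * u)))"
    unfolding yr ar hr using r by simp
  also have "\<dots> = \<kappa> * (r*r) / 3 * TT a u"
    unfolding TT_def by (rule ring_id[OF y_def])
  also have "\<kappa> * (r*r) / 3 * TT a u = \<kappa> * h / 3 * TT (x i / sqrt h) (g i)"
    using h by (simp add: a_def u_def r_def)
  finally show ?thesis using False by simp
qed


theorem lemma8:
  "\<exists>d0::nat. \<forall>\<kappa>::real. \<forall>h::real. \<forall>d::nat. \<forall>x::nat \<Rightarrow> real.
     \<kappa> \<ge> 3 \<longrightarrow> h > 0 \<longrightarrow> d \<ge> d0 \<longrightarrow>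
     measure (gauss d)
       {g \<in> space (gauss d).
          (\<Sum>i=1..d. S_coord \<kappa> h i x g)
            - (\<integral>g'. (\<Sum>i=1..d. S_coord \<kappa> h i x g') \<partial>gauss d)
          \<le> 10 * h * \<kappa> * sqrt (real d * ln (real d))}
     \<ge> 1 - real d powr (-5)"
proof (intro exI[of _ 8000] allI impI)
  fix \<kappa> h :: real and d :: nat and x :: "nat \<Rightarrow> real"
  assume \<kappa>: "\<kappa> \<ge> 3" and h: "h > 0" and d: "8000 \<le> d"
  define Fa where "Fa i u = (if i = 1 then 0 else TT (x i / sqrt h) u)" for i u
  define c0 where "c0 = \<kappa> * h / 3"
  have c0: "c0 > 0" using \<kappa> h by (simp add: c0_def)
  have Sg: "(\<Sum>i=1..d. S_coord \<kappa> h i x g) = c0 * (\<Sum>i=1..d. Fa i (g i))" for g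
    by (simp add: S_eq[OF h] Fa_def c0_def sum_distrib_left)
  have Fm: "Fa i \<in> borel_measurable borel" for i
  proof -
    have "Fa i = (if i = 1 then (\<lambda>u. 0) else TT (x i / sqrt h))" by (auto simp: Fa_def fun_eq_iff)
    thus ?thesis by (simp add: TT_meas)
  qed
  have Fb: "\<bar>Fa i u\<bar> \<le> 2 + 3/2 * \<bar>u\<bar>" for i u
    using TT_bound[of "x i / sqrt h" u] by (simp add: Fa_def)
  define s where "s = sqrt (real d * ln (real d))"
  have dr: "real d \<ge> 8000" using d by simp
  note nm = numeric[OF dr, folded s_def]
  have main: "measure (gauss d) {g \<in> space (gauss d). (\<Sum>i=1..d. Fa i (g i)) - (\<integral>g. (\<Sum>i=1..d. Fa i (g i)) \<partial>gauss d) \<le> 30 * s}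
     \<ge> 1 - exp (- (s / (3 * real d)) * (30 * s) + 45 * (s / (3 * real d))\<^sup>2 * real d)"
    by (rule chernoff_prod[OF Fm Fb nm(1) nm(2)])
  have seteq: "{g \<in> space (gauss d).
          (\<Sum>i=1..d. S_coord \<kappa> h i x g)
            - (\<integral>g'. (\<Sum>i=1..d. S_coord \<kappa> h i x g') \<partial>gauss d)
          \<le> 10 * h * \<kappa> * sqrt (real d * ln (real d))} =
     {g \<in> space (gauss d). (\<Sum>i=1..d. Fa i (g i)) - (\<integral>g. (\<Sum>i=1..d. Fa i (g i)) \<partial>gauss d) \<le> 30 * s}"
  proof -
    have ie: "(\<integral>g'. c0 * (\<Sum>i=1..d. Fa i (g' i)) \<partial>gauss d) = c0 * (\<integral>g. (\<Sum>i=1..d. Fa i (g i)) \<partial>gauss d)"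
      by (rule integral_mult_right_zero)
    have e10: "10 * h * \<kappa> * s = c0 * (30 * s)" by (simp add: c0_def)
    have cancel: "c0 * A - c0 * B \<le> c0 * (30 * s) \<longleftrightarrow> A - B \<le> 30 * s" for A B
      using c0 by (simp add: right_diff_distrib[symmetric])
    show ?thesis by (simp only: Sg ie s_def[symmetric] e10 cancel)
  qed
  show "measure (gauss d)
       {g \<in> space (gauss d).
          (\<Sum>i=1..d. S_coord \<kappa> h i x g)
            - (\<integral>g'. (\<Sum>i=1..d. S_coord \<kappa> h i x g') \<partial>gauss d)
          \<le> 10 * h * \<kappa> * sqrt (real d * ln (real d))}
     \<ge> 1 - real d powr (-5)"
    unfolding seteq using main nm(3) by simp
qed

end
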